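(* With the notation of the context, let $\beta^*=\inf_{x\in\Delta}F(x)$. For every $x^*\in\Delta$ with $F(x^* )=\beta^*$ there exists a relation $r_0$ of type 4b such that $f_{r_0}(x^* )=\beta^*$.
   Context: Fix an integer $n\ge2$ and free generators $\xi_1,\dots,\xi_n$ of a free group; throughout $i,j,k\in\{1,\dots,n\}$ and $t,s,p\in\{-1,+1\}$. Let $\Psi$ be the set of reduced words $\xi_i^{2t}$; $\xi_i^t\xi_j^{2s}$ ($i\ne j$); $\xi_i^t\xi_j^s\xi_k^p$ ($i\ne j$, $j\ne k$). For a letter $\xi_a^x$ let $S(\xi_a^x)\subset\Psi$ be the set of words in $\Psi$ beginning with $\xi_a^x$, namely $\{\xi_a^{2x}\}\cup\{\xi_a^x\xi_j^{2s}\}\cup\{\xi_a^x\xi_j^s\xi_k^p\}$; for $a\ne b$ let $S(\xi_a^x\xi_b^y)=\{\xi_a^x\xi_b^{2y}\}\cup\{\xi_a^x\xi_b^y\xi_k^p: k\ne b\}$. A relation $r$ is a pair $(\psi_r,\Psi_r)$ with $\psi_r\in\Psi$, $\Psi_r\subseteq\Psi$. Let $\mathcal{F}$ be the collection of the following relations (indices $i_0\ne j_0$, in type 5a $i_0,j_0,k_0$ pairwise distinct, all signs arbitrary): 1a: $\psi_r=\xi_{i_0}^{2t_0}$, $\Psi_r=\Psi\setminus S(\xi_{i_0}^{t_0})$; 2b: $\psi_r=\xi_{i_0}^{t_0}\xi_{j_0}^{2s_0}$, $\Psi_r=\Psi\setminus S(\xi_{i_0}^{t_0}\xi_{j_0}^{s_0})$;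 3a: $\psi_r=\xi_{i_0}^{t_0}\xi_{j_0}^{s_0}\xi_{i_0}^{t_0}$, $\Psi_r=\Psi\setminus S(\xi_{j_0}^{s_0}\xi_{i_0}^{t_0})$; 4b: $\psi_r=\xi_{i_0}^{t_0}\xi_{j_0}^{s_0}\xi_{i_0}^{-t_0}$, $\Psi_r=S(\xi_{i_0}^{t_0})$; 5a: $\psi_r=\xi_{i_0}^{t_0}\xi_{j_0}^{s_0}\xi_{k_0}^{p_0}$, $\Psi_r=\Psi\setminus S(\xi_{j_0}^{s_0}\xi_{k_0}^{p_0})$. Let $\Delta=\{x\in\mathbb{R}^\Psi: x(\psi)>0\ \forall\psi,\ \sum_{\psi}x(\psi)=1\}$. For a relation $r$ and $x\in\Delta$ put $x_r=x(\psi_r)$, $X_r=\sum_{\psi\in\Psi_r}x(\psi)$, $f_r(x)=\frac{1-x_r}{x_r}\cdot\frac{1-X_r}{X_r}$, and $F(x)=\max_{r\in\mathcal{F}}f_r(x)$. *)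

theory Defs
  imports Complex_Main
begin

text \<open>A letter xi_i^t is the pair (i, t) with i in {1..n}, t in {-1,1}; a word is a list of letters.\<close>

type_synonym letter = "nat \<times> int"
type_synonym word = "letter list"

definition Sg :: "int set" where "Sg = {-1, 1}"

definition Psi :: "nat \<Rightarrow> word set" where
  "Psi n =
     {[(i,t),(i,t)] | i t. i \<in> {1..n} \<and> t \<in> Sg}
   \<union> {[(i,t),(j,s),(j,s)] | i t j s. i \<in> {1..n} \<and> j \<in> {1..n} \<and> t \<in> Sg \<and> s \<in> Sg \<and> i \<noteq> j}
   \<union> {[(i,t),(j,s),(k,p)] | i t j s k p. i \<in> {1..n} \<and> j \<in> {1..n} \<and> k \<in> {1..n}
        \<and> t \<in> Sg \<and> s \<in> Sg \<and> p \<in> Sg \<and> i \<noteq> j \<and> j \<noteq> k}"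

definition S1 :: "nat \<Rightarrow> letter \<Rightarrow> word set" where
  "S1 n l = {w \<in> Psi n. hd w = l}"

text \<open>S(xi_a^x xi_b^y) = {xi_a^x xi_b^(2y)} \<union> {xi_a^x xi_b^y xi_k^p : k \<noteq> b}.\<close>
definition S2 :: "nat \<Rightarrow> letter \<Rightarrow> letter \<Rightarrow> word set" where
  "S2 n l m = {[l, m, m]} \<union> {[l, m, (k,p)] | k p. k \<in> {1..n} \<and> p \<in> Sg \<and> k \<noteq> fst m}"

text \<open>A relation r = (psi_r, Psi_r).\<close>
type_synonym relation = "word \<times> word set"

definition rel_1a :: "nat \<Rightarrow> relation set" where
  "rel_1a n = {([(i0,t0),(i0,t0)], Psi n - S1 n (i0,t0)) | i0 t0. i0 \<in> {1..n} \<and> t0 \<in> Sg}"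

definition rel_2b :: "nat \<Rightarrow> relation set" where
  "rel_2b n = {([(i0,t0),(j0,s0),(j0,s0)], Psi n - S2 n (i0,t0) (j0,s0)) | i0 t0 j0 s0.
     i0 \<in> {1..n} \<and> j0 \<in> {1..n} \<and> t0 \<in> Sg \<and> s0 \<in> Sg \<and> i0 \<noteq> j0}"

definition rel_3a :: "nat \<Rightarrow> relation set" where
  "rel_3a n = {([(i0,t0),(j0,s0),(i0,t0)], Psi n - S2 n (j0,s0) (i0,t0)) | i0 t0 j0 s0.
     i0 \<in> {1..n} \<and> j0 \<in> {1..n} \<and> t0 \<in> Sg \<and> s0 \<in> Sg \<and> i0 \<noteq> j0}"

definition rel_4b :: "nat \<Rightarrow> relation set" where
  "rel_4b n = {([(i0,t0),(j0,s0),(i0,-t0)], S1 n (i0,t0)) | i0 t0 j0 s0.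
     i0 \<in> {1..n} \<and> j0 \<in> {1..n} \<and> t0 \<in> Sg \<and> s0 \<in> Sg \<and> i0 \<noteq> j0}"

definition rel_5a :: "nat \<Rightarrow> relation set" where
  "rel_5a n = {([(i0,t0),(j0,s0),(k0,p0)], Psi n - S2 n (j0,s0) (k0,p0)) | i0 t0 j0 s0 k0 p0.
     i0 \<in> {1..n} \<and> j0 \<in> {1..n} \<and> k0 \<in> {1..n} \<and> t0 \<in> Sg \<and> s0 \<in> Sg \<and> p0 \<in> Sg
     \<and> i0 \<noteq> j0 \<and> j0 \<noteq> k0 \<and> i0 \<noteq> k0}"

definition Fam :: "nat \<Rightarrow> relation set" where
  "Fam n = rel_1a n \<union> rel_2b n \<union> rel_3a n \<union> rel_4b n \<union> rel_5a n"

text \<open>The open simplex Delta in R^Psi, with points represented as functions word => real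
  (only the values on Psi matter).\<close>
definition Delta :: "nat \<Rightarrow> (word \<Rightarrow> real) set" where
  "Delta n = {x. (\<forall>\<psi>\<in>Psi n. x \<psi> > 0) \<and> (\<Sum>\<psi>\<in>Psi n. x \<psi>) = 1}"

definition f_rel :: "relation \<Rightarrow> (word \<Rightarrow> real) \<Rightarrow> real" where
  "f_rel r x = (let xr = x (fst r); Xr = (\<Sum>\<psi>\<in>snd r. x \<psi>)
               in ((1 - xr) / xr) * ((1 - Xr) / Xr))"

definition F_max :: "nat \<Rightarrow> (word \<Rightarrow> real) \<Rightarrow> real" where
  "F_max n x = Max ((\<lambda>r. f_rel r x) ` Fam n)"

end

theory Submission
  imports Defs
begin


lemma Sg_neg: "t \<in> Sg \<Longrightarrow> - t \<in> Sg" by (auto simp: Sg_def)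
lemma Sg_ne: "t \<in> Sg \<Longrightarrow> - t \<noteq> t" by (auto simp: Sg_def)
lemma one_Sg: "1 \<in> Sg" by (simp add: Sg_def)

lemma finite_Psi: "finite (Psi n)"
proof -
  have "Psi n \<subseteq> {w. set w \<subseteq> {1..n} \<times> Sg \<and> length w \<le> 3}"
    unfolding Psi_def by auto
  moreover have "finite {w. set w \<subseteq> {1..n} \<times> Sg \<and> length w \<le> 3}"
    by (rule finite_lists_length_le) (simp add: Sg_def)
  ultimately show ?thesis by (rule finite_subset)
qed

lemma Psi2: "i \<in> {1..n} \<Longrightarrow> t \<in> Sg \<Longrightarrow> [(i,t),(i,t)] \<in> Psi n"
  unfolding Psi_def by blast
lemma Psi3: "i \<in> {1..n} \<Longrightarrow> j \<in> {1..n} \<Longrightarrow> k \<in> {1..n} \<Longrightarrow> t \<in> Sg \<Longrightarrow> s \<in> Sg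
  \<Longrightarrow> p \<in> Sg \<Longrightarrow> i \<noteq> j \<Longrightarrow> j \<noteq> k \<Longrightarrow> [(i,t),(j,s),(k,p)] \<in> Psi n"
  unfolding Psi_def by blast
lemma Psi3b: "i \<in> {1..n} \<Longrightarrow> j \<in> {1..n} \<Longrightarrow> t \<in> Sg \<Longrightarrow> s \<in> Sg
  \<Longrightarrow> i \<noteq> j \<Longrightarrow> [(i,t),(j,s),(j,s)] \<in> Psi n"
  unfolding Psi_def by blast

lemma Psi_cases:
  assumes "u \<in> Psi n"
  obtains i t where "u = [(i,t),(i,t)]" "i\<in>{1..n}" "t\<in>Sg"
  | i t j s k p where "u = [(i,t),(j,s),(k,p)]" "i\<in>{1..n}" "j\<in>{1..n}" "k\<in>{1..n}"
      "t\<in>Sg" "s\<in>Sg" "p\<in>Sg" "i\<noteq>j"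
  using assms unfolding Psi_def by blast

definition isW :: "word \<Rightarrow> bool" where
  "isW w \<longleftrightarrow> length w = 3 \<and> w!2 = (fst (w!0), - snd (w!0))"
definition jo :: "nat \<Rightarrow> nat" where "jo a = (if a = 1 then 2 else 1)"
definition piw :: "word \<Rightarrow> word" where
  "piw u = (if length u = 3 then [u!0, u!1, (fst (u!0), - snd (u!0))]
            else [u!0, (jo (fst (u!0)), 1), (fst (u!0), - snd (u!0))])"

lemma piw_Psi:
  assumes "n \<ge> 2" "u \<in> Psi n"
  shows "piw u \<in> Psi n \<and> hd (piw u) = hd u"
  using assms(2)
proof (cases rule: Psi_cases)
  case (1 i t)
  have "jo i \<in> {1..n}" "jo i \<noteq> i" using assms(1) 1 by (auto simp: jo_def)
  then show ?thesis using 1 by (auto simp: piw_def intro!: Psi3 Sg_neg one_Sg)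
next
  case (2 i t j s k p)
  then show ?thesis by (auto simp: piw_def intro!: Psi3 Sg_neg)
qed

lemma S1_closed: "n \<ge> 2 \<Longrightarrow> u \<in> S1 n l \<Longrightarrow> piw u \<in> S1 n l"
  unfolding S1_def using piw_Psi by auto

lemma S2_closed:
  assumes "u \<in> S2 n l m" "fst l \<noteq> fst m" "fst l \<in> {1..n}" "snd l \<in> Sg"
  shows "piw u \<in> S2 n l m"
proof -
  have "piw u = [l, m, (fst l, - snd l)]" using assms(1) unfolding S2_def piw_def by auto
  then show ?thesis unfolding S2_def using assms(2-4) Sg_neg by auto
qed



definition goodr :: "nat \<Rightarrow> relation \<Rightarrow> bool" where
  "goodr n r \<longleftrightarrow> fst r \<in> Psi n \<and> \<not> isW (fst r) \<and>
     (\<exists>Y. snd r = Psi n - Y \<and> (\<forall>u\<in>Psi n. u \<in> Y \<longrightarrow> piw u \<in> Y) \<and> (\<exists>w\<in>Psi n. w \<in> Y) \<and> (\<exists>w\<in>Psi n. w \<notin> Y))"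

lemma goodI:
  assumes "fst r \<in> Psi n" "\<not> isW (fst r)" "snd r = Psi n - Y" "\<And>u. u \<in> Psi n \<Longrightarrow> u \<in> Y \<Longrightarrow> piw u \<in> Y"
    "w \<in> Psi n" "w \<in> Y" "w' \<in> Psi n" "w' \<notin> Y"
  shows "goodr n r"
  unfolding goodr_def using assms by blast

lemma good_1a: assumes "n \<ge> 2" "r \<in> rel_1a n" shows "goodr n r"
proof -
  obtain i t where r: "r = ([(i,t),(i,t)], Psi n - S1 n (i,t))" "i \<in> {1..n}" "t \<in> Sg"
    using assms(2) unfolding rel_1a_def by blast
  have w: "[(i,t),(i,t)] \<in> Psi n" using r by (intro Psi2)
  have j: "jo i \<in> {1..n}" "jo i \<noteq> i" using assms(1) r by (auto simp: jo_def)
  have w': "[(jo i,t),(jo i,t)] \<in> Psi n" using r j by (intro Psi2)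
  show ?thesis
    by (rule goodI[of r n "S1 n (i,t)" "[(i,t),(i,t)]" "[(jo i,t),(jo i,t)]"])
       (use r w w' j S1_closed[OF assms(1)] in \<open>auto simp: isW_def S1_def\<close>)
qed

lemma good_2b: assumes "n \<ge> 2" "r \<in> rel_2b n" shows "goodr n r"
proof -
  obtain i t j s where r: "r = ([(i,t),(j,s),(j,s)], Psi n - S2 n (i,t) (j,s))"
     "i \<in> {1..n}" "j \<in> {1..n}" "t \<in> Sg" "s \<in> Sg" "i \<noteq> j"
    using assms(2) unfolding rel_2b_def by blast
  have w: "[(i,t),(j,s),(j,s)] \<in> Psi n" using r by (intro Psi3b)
  have w': "[(i,t),(i,t)] \<in> Psi n" using r by (intro Psi2)
  show ?thesis
    by (rule goodI[of r n "S2 n (i,t) (j,s)" "[(i,t),(j,s),(j,s)]" "[(i,t),(i,t)]"])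
       (use r w w' S2_closed[of _ n "(i,t)" "(j,s)"] in \<open>auto simp: isW_def S2_def\<close>)
qed

lemma good_3a: assumes "n \<ge> 2" "r \<in> rel_3a n" shows "goodr n r"
proof -
  obtain i t j s where r: "r = ([(i,t),(j,s),(i,t)], Psi n - S2 n (j,s) (i,t))"
     "i \<in> {1..n}" "j \<in> {1..n}" "t \<in> Sg" "s \<in> Sg" "i \<noteq> j"
    using assms(2) unfolding rel_3a_def by blast
  have w: "[(i,t),(j,s),(i,t)] \<in> Psi n" using r by (intro Psi3) auto
  have w2: "[(j,s),(i,t),(i,t)] \<in> Psi n" using r by (intro Psi3b) auto
  have w': "[(i,t),(i,t)] \<in> Psi n" using r by (intro Psi2)
  show ?thesis
    by (rule goodI[of r n "S2 n (j,s) (i,t)" "[(j,s),(i,t),(i,t)]" "[(i,t),(i,t)]"])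
       (use r w w2 w' S2_closed[of _ n "(j,s)" "(i,t)"] Sg_ne[of t] in \<open>auto simp: isW_def S2_def\<close>)
qed

lemma good_5a: assumes "n \<ge> 2" "r \<in> rel_5a n" shows "goodr n r"
proof -
  obtain i t j s k p where r: "r = ([(i,t),(j,s),(k,p)], Psi n - S2 n (j,s) (k,p))"
     "i \<in> {1..n}" "j \<in> {1..n}" "k \<in> {1..n}" "t \<in> Sg" "s \<in> Sg" "p \<in> Sg"
     "i \<noteq> j" "j \<noteq> k" "i \<noteq> k"
    using assms(2) unfolding rel_5a_def by blast
  have w: "[(i,t),(j,s),(k,p)] \<in> Psi n" using r by (intro Psi3) auto
  have w2: "[(j,s),(k,p),(k,p)] \<in> Psi n" using r by (intro Psi3b) auto
  have w': "[(i,t),(i,t)] \<in> Psi n" using r by (intro Psi2)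
  show ?thesis
    by (rule goodI[of r n "S2 n (j,s) (k,p)" "[(j,s),(k,p),(k,p)]" "[(i,t),(i,t)]"])
       (use r w w2 w' S2_closed[of _ n "(j,s)" "(k,p)"] in \<open>auto simp: isW_def S2_def\<close>)
qed

lemma good_Fam: "n \<ge> 2 \<Longrightarrow> r \<in> Fam n \<Longrightarrow> r \<notin> rel_4b n \<Longrightarrow> goodr n r"
  unfolding Fam_def using good_1a good_2b good_3a good_5a by blast

lemma r4b: assumes "r \<in> rel_4b n"
  shows "fst r \<in> Psi n \<and> snd r \<subseteq> Psi n \<and> fst r \<in> snd r"
proof -
  obtain i t j s where r: "r = ([(i,t),(j,s),(i,-t)], S1 n (i,t))"
     "i \<in> {1..n}" "j \<in> {1..n}" "t \<in> Sg" "s \<in> Sg" "i \<noteq> j"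
    using assms unfolding rel_4b_def by blast
  have w: "[(i,t),(j,s),(i,-t)] \<in> Psi n" using r Sg_neg by (intro Psi3) auto
  show ?thesis using r w by (auto simp: S1_def)
qed

lemma Fam_sub: assumes "n \<ge> 2" "r \<in> Fam n" shows "fst r \<in> Psi n \<and> snd r \<subseteq> Psi n"
proof (cases "r \<in> rel_4b n")
  case True then show ?thesis using r4b by blast
next
  case False then show ?thesis using good_Fam[OF assms False] unfolding goodr_def by auto
qed

lemma Fam_finite: assumes "n \<ge> 2" shows "finite (Fam n)"
proof -
  have "Fam n \<subseteq> Psi n \<times> Pow (Psi n)" using Fam_sub[OF assms] by force
  then show ?thesis using finite_Psi by (meson finite_Pow_iff finite_SigmaI finite_subset)
qed

lemma Fam_ne: assumes "n \<ge> 2" shows "([(1,1),(1,1)], Psi n - S1 n (1,1)) \<in> Fam n"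
  using assms unfolding Fam_def rel_1a_def Sg_def by force



lemma Delta_le1: assumes "x \<in> Delta n" "A \<subseteq> Psi n"
  shows "0 \<le> sum x A \<and> sum x A \<le> 1"
proof -
  have pos: "\<forall>w\<in>Psi n. 0 < x w" and s: "sum x (Psi n) = 1" using assms(1) by (auto simp: Delta_def)
  have "sum x A \<le> sum x (Psi n)"
    using assms(2) pos by (intro sum_mono2[OF finite_Psi]) auto
  moreover have "0 \<le> sum x A" using assms(2) pos by (intro sum_nonneg) (auto simp: less_imp_le subset_iff)
  ultimately show ?thesis using s by simp
qed

lemma Delta_pt: assumes "x \<in> Delta n" "w \<in> Psi n" shows "0 < x w \<and> x w \<le> 1"
  using Delta_le1[OF assms(1), of "{w}"] assms by (auto simp: Delta_def)

lemma f_nonneg: assumes "x \<in> Delta n" "fst r \<in> Psi n" "snd r \<subseteq> Psi n"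
  shows "0 \<le> f_rel r x"
proof -
  have a: "0 < x (fst r)" "x (fst r) \<le> 1" using Delta_pt[OF assms(1,2)] by auto
  have b: "0 \<le> sum x (snd r)" "sum x (snd r) \<le> 1" using Delta_le1[OF assms(1,3)] by auto
  show ?thesis unfolding f_rel_def Let_def using a b by (intro mult_nonneg_nonneg divide_nonneg_nonneg) auto
qed

lemma mono_f:
  fixes a a' b b' :: real
  assumes "0 < a" "a < a'" "a' \<le> 1" "0 < b" "b \<le> b'" "b' \<le> 1" "b < 1"
  shows "((1-a')/a') * ((1-b')/b') < ((1-a)/a) * ((1-b)/b)"
proof -
  have "(1 - a') * a < (1 - a) * a'" using assms by (simp add: algebra_simps)
  then have P: "0 \<le> (1-a')/a'" "(1-a')/a' < (1-a)/a" using assms by (auto simp: divide_simps)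
  have "(1 - b') * b \<le> (1 - b) * b'" using assms by (simp add: algebra_simps)
  then have Q: "0 \<le> (1-b')/b'" "(1-b')/b' \<le> (1-b)/b" "0 < (1-b)/b" using assms by (auto simp: divide_simps)
  have "((1-a')/a') * ((1-b')/b') \<le> ((1-a')/a') * ((1-b)/b)" using P Q by (intro mult_left_mono) auto
  also have "\<dots> < ((1-a)/a) * ((1-b)/b)" using P Q by (intro mult_strict_right_mono) auto
  finally show ?thesis .
qed



theorem lemma5p4:
  fixes n :: nat and xs :: "word \<Rightarrow> real"
  assumes "n \<ge> 2"
    and "xs \<in> Delta n"
    and "F_max n xs = (INF x\<in>Delta n. F_max n x)"
  shows "\<exists>r0\<in>rel_4b n. f_rel r0 xs = (INF x\<in>Delta n. F_max n x)"
proof (rule ccontr)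
  assume contra: "\<not> ?thesis"
  define \<beta> where "\<beta> = (INF x\<in>Delta n. F_max n x)"
  have n2: "n \<ge> 2" by fact
  have finF: "finite (Fam n)" using Fam_finite[OF n2] .
  have neF: "Fam n \<noteq> {}" using Fam_ne[OF n2] by blast
  have le\<beta>: "f_rel r xs \<le> \<beta>" if "r \<in> Fam n" for r
  proof -
    have "f_rel r xs \<le> F_max n xs" unfolding F_max_def using finF that by (intro Max_ge) auto
    then show ?thesis using assms(3) \<beta>_def by simp
  qed
  have lt4: "f_rel r xs < \<beta>" if "r \<in> rel_4b n" for r
  proof -
    have "r \<in> Fam n" using that unfolding Fam_def by blast
    then have "f_rel r xs \<le> \<beta>" by (rule le\<beta>)
    moreover have "f_rel r xs \<noteq> \<beta>" using contra that unfolding \<beta>_def by blast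
    ultimately show ?thesis by simp
  qed
  have posx: "\<And>w. w \<in> Psi n \<Longrightarrow> 0 < xs w" and sumx: "sum xs (Psi n) = 1"
    using assms(2) by (auto simp: Delta_def)
  define N where "N = {u \<in> Psi n. \<not> isW u}"
  have finN: "finite N" unfolding N_def using finite_Psi by auto
  define c where "c \<psi> = (\<Sum>u\<in>N. (if \<psi> = u then 1 else 0) - (if \<psi> = piw u then 1 else (0::real)))" for \<psi>
  define xe where "xe e \<psi> = xs \<psi> + e * c \<psi>" for e \<psi>
  have sumxe: "sum (xe e) A = sum xs A + e * (\<Sum>u\<in>N. (if u \<in> A then 1 else 0) - (if piw u \<in> A then 1 else 0))"
    if "finite A" for A e
  proof -
    have "sum c A = (\<Sum>u\<in>N. \<Sum>\<psi>\<in>A. (if \<psi> = u then 1 else 0) - (if \<psi> = piw u then 1 else (0::real)))"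
      unfolding c_def by (rule sum.swap)
    also have "\<dots> = (\<Sum>u\<in>N. (if u \<in> A then 1 else 0) - (if piw u \<in> A then 1 else 0))"
      using that by (simp add: sum_subtractf)
    finally have "sum c A = (\<Sum>u\<in>N. (if u \<in> A then 1 else 0) - (if piw u \<in> A then 1 else 0))" .
    moreover have "sum (xe e) A = sum xs A + e * sum c A"
      unfolding xe_def by (simp add: sum.distrib sum_distrib_left)
    ultimately show ?thesis by simp
  qed
  have sum1: "sum (xe e) (Psi n) = 1" for e
    using sumxe[OF finite_Psi, of e] sumx piw_Psi[OF n2] by (simp add: N_def)
  have lim: "((\<lambda>e. xe e \<psi>) \<longlongrightarrow> xs \<psi>) (at_right 0)" for \<psi>
    unfolding xe_def by (auto intro!: tendsto_eq_intros)
  have limS: "((\<lambda>e. sum (xe e) A) \<longlongrightarrow> sum xs A) (at_right 0)" for A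
    by (intro tendsto_sum lim)
  have ev1: "\<forall>\<^sub>F e in at_right 0. \<forall>\<psi>\<in>Psi n. 0 < xe e \<psi>"
    using finite_Psi by (rule eventually_ball_finite) (auto intro: order_tendstoD(1)[OF lim posx])
  have ev2: "\<forall>\<^sub>F e in at_right 0. \<forall>r\<in>rel_4b n. f_rel r (xe e) < \<beta>"
  proof (rule eventually_ball_finite)
    show "finite (rel_4b n)" using finF by (rule finite_subset[rotated]) (auto simp: Fam_def)
  next
    show "\<forall>r\<in>rel_4b n. \<forall>\<^sub>F e in at_right 0. f_rel r (xe e) < \<beta>"
    proof
    fix r assume r: "r \<in> rel_4b n"
    have rr: "fst r \<in> Psi n" "snd r \<subseteq> Psi n" "fst r \<in> snd r" using r4b[OF r] by auto
    have p1: "xs (fst r) \<noteq> 0" using posx rr by force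
    have "sum xs (snd r) \<ge> xs (fst r)"
      using rr posx finite_subset[OF rr(2) finite_Psi]
      by (intro member_le_sum) (auto simp: less_imp_le subset_iff)
    then have p2: "sum xs (snd r) \<noteq> 0" using p1 posx rr by force
    have "((\<lambda>e. ((1 - xe e (fst r))/xe e (fst r)) * ((1 - sum (xe e) (snd r))/sum (xe e) (snd r)))
       \<longlongrightarrow> ((1 - xs (fst r))/xs (fst r)) * ((1 - sum xs (snd r))/sum xs (snd r))) (at_right 0)"
      by (intro tendsto_mult tendsto_divide tendsto_diff tendsto_const lim limS p1 p2)
    then have "((\<lambda>e. f_rel r (xe e)) \<longlongrightarrow> f_rel r xs) (at_right 0)"
      unfolding f_rel_def Let_def by simp
    then show "\<forall>\<^sub>F e in at_right 0. f_rel r (xe e) < \<beta>"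
      using order_tendstoD(2)[OF _ lt4[OF r]] by blast
    qed
  qed
  obtain e where e: "0 < e" "\<forall>\<psi>\<in>Psi n. 0 < xe e \<psi>" "\<forall>r\<in>rel_4b n. f_rel r (xe e) < \<beta>"
    using eventually_happens'[OF _ eventually_conj[OF eventually_at_right_less eventually_conj[OF ev1 ev2]]]
    by auto
  have De: "xe e \<in> Delta n" using e(2) sum1 by (auto simp: Delta_def)
  have ltall: "f_rel r (xe e) < \<beta>" if r: "r \<in> Fam n" for r
  proof (cases "r \<in> rel_4b n")
    case True then show ?thesis using e(3) by blast
  next
    case False
    have g: "goodr n r" using good_Fam[OF n2 r False] .
    then obtain Y w where Y: "snd r = Psi n - Y" "\<forall>u\<in>Psi n. u \<in> Y \<longrightarrow> piw u \<in> Y"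
      "w \<in> Psi n" "w \<in> Y" and w2: "\<exists>w\<in>Psi n. w \<notin> Y" and f: "fst r \<in> Psi n" "\<not> isW (fst r)"
      unfolding goodr_def by blast
    have fN: "fst r \<in> N" using f N_def by auto
    have ce: "c (fst r) = 1"
    proof -
      have "c (fst r) = (\<Sum>u\<in>N. (if fst r = u then 1 else 0)) - (\<Sum>u\<in>N. (if fst r = piw u then 1 else (0::real)))"
        unfolding c_def by (simp add: sum_subtractf)
      moreover have "(\<Sum>u\<in>N. (if fst r = u then 1 else (0::real))) = 1"
        using fN finN by (simp add: sum.delta)
      moreover have "\<forall>u\<in>N. fst r \<noteq> piw u"
      proof
        fix u assume "u \<in> N"
        have "isW (piw u)" by (auto simp: piw_def isW_def)
        then show "fst r \<noteq> piw u" using f(2) by auto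
      qed
      ultimately show ?thesis by simp
    qed
    have a1: "xe e (fst r) = xs (fst r) + e" unfolding xe_def ce by simp
    have fin: "finite (snd r)" using Y(1) finite_Psi by simp
    have b1: "sum (xe e) (snd r) \<ge> sum xs (snd r)"
    proof -
      have "0 \<le> (\<Sum>u\<in>N. (if u \<in> snd r then 1 else 0) - (if piw u \<in> snd r then 1 else (0::real)))"
      proof (rule sum_nonneg)
        fix u assume u: "u \<in> N"
        then have "u \<in> Psi n" "piw u \<in> Psi n" using piw_Psi[OF n2] N_def by auto
        then show "0 \<le> (if u \<in> snd r then 1 else 0) - (if piw u \<in> snd r then 1 else (0::real))"
          using Y(1,2) by auto
      qed
      then show ?thesis using sumxe[OF fin, of e] e(1) by simp
    qed
    have sub: "snd r \<subseteq> Psi n" using Y(1) by auto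
    have b2: "sum xs (snd r) < 1"
    proof -
      have "sum xs (Psi n) = sum xs (snd r) + sum xs (Psi n - snd r)"
        using sub finite_Psi by (metis sum.subset_diff add.commute)
      moreover have "xs w \<le> sum xs (Psi n - snd r)"
        using Y posx finite_Psi by (intro member_le_sum) (auto simp: less_imp_le)
      ultimately show ?thesis using sumx posx[OF Y(3)] by linarith
    qed
    have b0: "0 < sum xs (snd r)"
    proof -
      obtain w' where w': "w' \<in> Psi n" "w' \<notin> Y" using w2 by blast
      have "xs w' \<le> sum xs (snd r)"
        using w' Y(1) posx fin by (intro member_le_sum) (auto simp: less_imp_le)
      then show ?thesis using posx[OF w'(1)] by linarith
    qed
    have "f_rel r (xe e) < f_rel r xs"
      unfolding f_rel_def Let_def
      apply (rule mono_f)
      using posx[OF f(1)] e(1) a1 Delta_pt[OF De f(1)] b0 b1 Delta_le1[OF De sub] b2 by auto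
    then show ?thesis using le\<beta>[OF r] by linarith
  qed
  have "F_max n (xe e) < \<beta>" unfolding F_max_def using finF neF ltall by (subst Max_less_iff) auto
  moreover have "\<beta> \<le> F_max n (xe e)"
    unfolding \<beta>_def
  proof (rule cINF_lower[OF _ De])
    show "bdd_below (F_max n ` Delta n)"
    proof (rule bdd_belowI2)
      fix x assume x: "x \<in> Delta n"
      obtain r where r: "r \<in> Fam n" using neF by blast
      have "0 \<le> f_rel r x" using f_nonneg[OF x] Fam_sub[OF n2 r] by blast
      also have "\<dots> \<le> F_max n x" unfolding F_max_def using finF r by (intro Max_ge) auto
      finally show "0 \<le> F_max n x" .
    qed
  qed
  ultimately show False by simp
qed

end
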